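(* Let $\alpha>0$ and $\beta\in\mathbb{R}$ satisfy one of: $\beta\le\alpha<1$; or $\beta\le 1<\alpha$; or $\beta<\alpha=1$. Then the generalized $\beta$-Ces\`aro operator $C_{g_\beta}$ is a bounded linear operator from $(\mathcal{B}_\alpha^0,\|\cdot\|_{\mathcal{B}_\alpha})$ to itself.
   Context: $\mathbb{D}=\{z\in\mathbb{C}:|z|<1\}$. For $\alpha>0$, the $\alpha$-Bloch space $\mathcal{B}_\alpha$ is the space of analytic functions $f$ on $\mathbb{D}$ with $\|f\|_{\mathcal{B}_\alpha}:=\sup_{z\in\mathbb{D}}(1-|z|^2)^\alpha|f'(z)|<\infty$. $\mathcal{B}_\alpha^0=\{f\in\mathcal{B}_\alpha: f(0)=0\}$, normed by $\|\cdot\|_{\mathcal{B}_\alpha}$. For $\beta\in\mathbb{R}$, let $g_\beta(w)=\sum_{j=1}^k\frac{a_j}{(1-b_jw)^\beta}+h(w)$, where $k\ge1$, $b_1,\dots,b_k$ are distinct points of the unit circle, $a_j\in\mathbb{C}$ with $|a_j|>0$, $h$ is a bounded analytic function on $\mathbb{D}$, and powers are principal branches. The generalized $\beta$-Ces\`aro operator is $C_{g_\beta}(f)(z)=\int_0^z\frac{f(w)g_\beta(w)}{w}\,dw$ for analytic $f$ on $\mathbb{D}$ with $f(0)=0$. *)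

theory Defs
  imports "HOL-Complex_Analysis.Complex_Analysis"
begin

definition bloch_norm :: "real \<Rightarrow> (complex \<Rightarrow> complex) \<Rightarrow> real" where
  "bloch_norm \<alpha> f = (SUP z\<in>ball 0 1. (1 - (norm z)\<^sup>2) powr \<alpha> * norm (deriv f z))"

definition bloch_space :: "real \<Rightarrow> (complex \<Rightarrow> complex) set" where
  "bloch_space \<alpha> = {f. f holomorphic_on ball 0 1 \<and>
      bdd_above ((\<lambda>z. (1 - (norm z)\<^sup>2) powr \<alpha> * norm (deriv f z)) ` ball 0 1)}"

definition bloch_space0 :: "real \<Rightarrow> (complex \<Rightarrow> complex) set" where
  "bloch_space0 \<alpha> = {f \<in> bloch_space \<alpha>. f 0 = 0}"

definition g_beta :: "real \<Rightarrow> nat \<Rightarrow> (nat \<Rightarrow> complex) \<Rightarrow> (nat \<Rightarrow> complex)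
    \<Rightarrow> (complex \<Rightarrow> complex) \<Rightarrow> complex \<Rightarrow> complex" where
  "g_beta \<beta> k a b h w = (\<Sum>j<k. a j / (1 - b j * w) powr (complex_of_real \<beta>)) + h w"

definition cesaro_op :: "(complex \<Rightarrow> complex) \<Rightarrow> (complex \<Rightarrow> complex) \<Rightarrow> complex \<Rightarrow> complex" where
  "cesaro_op g f z = contour_integral (linepath 0 z) (\<lambda>w. f w * g w / w)"

end

theory Submission
  imports Defs
begin


lemma growth:
  fixes f :: "complex \<Rightarrow> complex"
  assumes hol: "f holomorphic_on ball 0 1" and f0: "f 0 = 0" and gp: "\<gamma> > 0" "\<gamma> \<noteq> 1"
    and M: "M \<ge> 0"
    and bd: "\<And>w. w \<in> ball 0 1 \<Longrightarrow> norm (deriv f w) \<le> M * (1 - norm w) powr (-\<gamma>)"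
    and z: "z \<in> ball 0 1"
  shows "norm (f z) \<le> M / \<bar>1-\<gamma>\<bar> * (1 - norm z) powr (- max 0 (\<gamma>-1))"
proof -
  define r where "r = norm z"
  have r: "0 \<le> r" "r < 1" using z by (auto simp: r_def)
  define u where "u = (\<lambda>t::real. f (of_real t * z))"
  define \<phi> where "\<phi> = (\<lambda>t::real. - M * (1 - t*r) powr (1-\<gamma>) / (1-\<gamma>))"
  define \<phi>' where "\<phi>' = (\<lambda>t::real. M * r * (1 - t*r) powr (-\<gamma>))"
  have inb: "of_real t * z \<in> ball 0 1" if "0 \<le> t" "t \<le> 1" for t
  proof -
    have "norm (of_real t * z) = t * r" using that by (simp add: r_def norm_mult)
    also have "\<dots> \<le> r" using that r by (simp add: mult_left_le_one_le)
    finally show ?thesis using r by simp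
  qed
  have df: "(f has_field_derivative deriv f w) (at w)" if "w \<in> ball 0 1" for w
    using hol that by (meson DERIV_deriv_iff_field_differentiable holomorphic_on_imp_differentiable_at open_ball)
  have ucont: "continuous_on {0..1} u"
    unfolding u_def
    by (rule continuous_on_compose2[OF holomorphic_on_imp_continuous_on[OF hol]])
       (auto intro!: continuous_intros inb)
  have pos: "0 < 1 - t*r" if "t \<le> 1" for t
  proof -
    have "t * r \<le> r" using mult_right_mono[OF that r(1)] by simp
    then show ?thesis using r by simp
  qed
  have phid: "(\<phi> has_real_derivative \<phi>' t) (at t)" if "t \<le> 1" for t
  proof -
    have d1: "((\<lambda>x. 1 - x*r) has_real_derivative -r) (at t)"
      by (auto intro!: derivative_eq_intros)
    have d2: "((\<lambda>x. (1 - x*r) powr (1-\<gamma>)) has_real_derivative ((1-\<gamma>) * (1-t*r) powr (1-\<gamma>-1)) * (-r)) (at t)"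
      using DERIV_chain2[OF has_real_derivative_powr[OF pos[OF that]] d1] .
    have d3: "((\<lambda>x. (- M / (1-\<gamma>)) * (1 - x*r) powr (1-\<gamma>)) has_real_derivative (- M / (1-\<gamma>)) * (((1-\<gamma>) * (1-t*r) powr (1-\<gamma>-1)) * (-r))) (at t)"
      by (rule DERIV_cmult[OF d2])
    have e1: "(- M / (1-\<gamma>)) * (((1-\<gamma>) * (1-t*r) powr (1-\<gamma>-1)) * (-r)) = \<phi>' t"
      using gp by (simp add: \<phi>'_def)
    have e2: "(\<lambda>x. (- M / (1-\<gamma>)) * (1 - x*r) powr (1-\<gamma>)) = \<phi>"
      by (simp add: \<phi>_def fun_eq_iff)
    show ?thesis using d3 unfolding e1 e2 .
  qed
  have phicont: "continuous_on {0..1} \<phi>"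
    using phid by (meson DERIV_isCont atLeastAtMost_iff continuous_at_imp_continuous_on)
  have ud: "(u has_vector_derivative (z * deriv f (of_real t * z))) (at t)" if "0 \<le> t" "t \<le> 1" for t
  proof -
    have "((\<lambda>t. of_real t * z) has_vector_derivative z) (at t)"
      by (auto intro!: derivative_eq_intros)
    from field_vector_diff_chain_at[OF this df[OF inb[OF that]]]
    show ?thesis by (simp add: u_def o_def)
  qed
  have bnd: "norm (z * deriv f (of_real t * z)) \<le> \<phi>' t" if "0 \<le> t" "t \<le> 1" for t
  proof -
    have "norm (z * deriv f (of_real t * z)) = r * norm (deriv f (of_real t * z))"
      by (simp add: r_def norm_mult)
    also have "\<dots> \<le> r * (M * (1 - norm (of_real t * z)) powr (-\<gamma>))"
      using bd[OF inb[OF that]] r by (simp add: mult_left_mono)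
    also have "norm (of_real t * z) = t * r" using that by (simp add: r_def norm_mult)
    finally show ?thesis by (simp add: \<phi>'_def mult_ac)
  qed
  have "norm (u 1 - u 0) \<le> \<phi> 1 - \<phi> 0"
    by (rule differentiable_bound_general[OF zero_less_one ucont phicont, of "\<lambda>t. z * deriv f (of_real t * z)" \<phi>'])
       (auto intro: ud bnd has_real_derivative_iff_has_vector_derivative[THEN iffD1, OF phid])
  then have main: "norm (f z) \<le> M * (1 - (1-r) powr (1-\<gamma>)) / (1-\<gamma>)"
    by (simp add: u_def f0 \<phi>_def diff_divide_distrib right_diff_distrib)
  have s: "0 < 1 - r" "1 - r \<le> 1" using r by auto
  show ?thesis
  proof (cases "\<gamma> < 1")
    case True
    have "M * (1 - (1-r) powr (1-\<gamma>)) / (1-\<gamma>) \<le> M * 1 / (1-\<gamma>)"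
      using True M by (intro divide_right_mono mult_left_mono) auto
    then show ?thesis using main True s r by (simp add: r_def)
  next
    case False
    then have g1: "\<gamma> > 1" using gp by simp
    have "M * (1 - (1-r) powr (1-\<gamma>)) / (1-\<gamma>) = M * ((1-r) powr (1-\<gamma>) - 1) / (\<gamma>-1)"
      using g1 by (simp add: field_simps)
    also have "\<dots> \<le> M * (1-r) powr (1-\<gamma>) / (\<gamma>-1)"
      using g1 M by (intro divide_right_mono mult_left_mono) auto
    finally show ?thesis using main g1 by (simp add: r_def)
  qed
qed



lemma re_pos_aux:
  assumes "norm (c::complex) = 1" "w \<in> ball 0 1"
  shows "Re (1 - c * w) > 0" "norm (1 - c*w) \<ge> 1 - norm w" "norm (1 - c*w) \<le> 2"
proof -
  have nw: "norm (c*w) = norm w" using assms by (simp add: norm_mult)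
  have "Re (c*w) \<le> norm (c*w)" by (rule complex_Re_le_cmod)
  then show "Re (1 - c * w) > 0" using nw assms by simp
  have "norm (1::complex) - norm (c*w) \<le> norm (1 - c*w)" by (rule norm_triangle_ineq2)
  then show "norm (1 - c*w) \<ge> 1 - norm w" using nw by simp
  have "norm (1 - c*w) \<le> norm (1::complex) + norm (c*w)" by (rule norm_triangle_ineq4)
  then show "norm (1 - c*w) \<le> 2" using nw assms by simp
qed

lemma g_holo:
  assumes "\<And>j. j < k \<Longrightarrow> norm (b j) = 1" "h holomorphic_on ball 0 1"
  shows "g_beta \<beta> k a b h holomorphic_on ball 0 1"
proof -
  have nz: "1 - b j * w \<notin> \<real>\<^sub>\<le>\<^sub>0" if "j < k" "w \<in> ball 0 1" for j w
    using re_pos_aux(1)[OF assms(1)[OF that(1)] that(2)] by (auto simp: complex_nonpos_Reals_iff)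
  have nz2: "(1 - b j * w) powr complex_of_real \<beta> \<noteq> 0" if "j < k" "w \<in> ball 0 1" for j w
  proof -
    have "Re (1 - b j * w) > 0" using re_pos_aux(1)[OF assms(1)[OF that(1)] that(2)] .
    then have "1 - b j * w \<noteq> 0" by (metis less_irrefl zero_complex.simps(1))
    then show ?thesis by (simp add: powr_def)
  qed
  have nz3: "b j * w \<noteq> 1" if "j < k" "w \<in> ball 0 1" for j w
  proof -
    have "Re (1 - b j * w) > 0" using re_pos_aux(1)[OF assms(1)[OF that(1)] that(2)] .
    then have "1 - b j * w \<noteq> 0" by (metis less_irrefl zero_complex.simps(1))
    then show ?thesis by auto
  qed
  show ?thesis unfolding g_beta_def[abs_def]
    by (intro holomorphic_intros assms(2)) (auto simp: nz nz2 nz3)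
qed

lemma g_bound:
  assumes "\<And>j. j < k \<Longrightarrow> norm (b j) = 1" "bounded (h ` ball 0 1)"
  shows "\<exists>K\<ge>0. \<forall>z\<in>ball 0 1. norm (g_beta \<beta> k a b h z) \<le> K * (1 - norm z) powr (- max \<beta> 0)"
proof -
  obtain H where H0: "\<forall>x\<in>h ` ball 0 1. norm x \<le> H"
    using assms(2) unfolding bounded_iff by blast
  have H: "\<And>z. z \<in> ball 0 1 \<Longrightarrow> norm (h z) \<le> H" using H0 by blast
  define c where "c = 2 powr (max \<beta> 0 - \<beta>)"
  define K where "K = (\<Sum>j<k. norm (a j)) * c + max H 0"
  have c: "c \<ge> 0" by (simp add: c_def)
  have K: "K \<ge> 0" unfolding K_def using c by (intro add_nonneg_nonneg mult_nonneg_nonneg sum_nonneg) auto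
  have main: "norm (g_beta \<beta> k a b h z) \<le> K * (1 - norm z) powr (- max \<beta> 0)" if z: "z \<in> ball 0 1" for z
  proof -
    define s where "s = 1 - norm z"
    have s: "0 < s" "s \<le> 1" using z by (auto simp: s_def)
    have s1: "1 \<le> s powr (- max \<beta> 0)"
      using powr_mono2'[of "- max \<beta> 0" s 1] s by simp
    have trm: "norm (a j / (1 - b j * z) powr complex_of_real \<beta>) \<le> norm (a j) * c * s powr (- max \<beta> 0)"
      if j: "j < k" for j
    proof -
      define q where "q = norm (1 - b j * z)"
      have q: "s \<le> q" "q \<le> 2" using re_pos_aux(2,3)[OF assms(1)[OF j] z] by (auto simp: q_def s_def)
      have qp: "q > 0" using q s by simp
      have "norm (a j / (1 - b j * z) powr complex_of_real \<beta>) = norm (a j) / q powr \<beta>"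
        by (simp add: norm_divide norm_powr_real_powr' q_def)
      also have "\<dots> = norm (a j) * q powr (-\<beta>)" by (simp add: powr_minus_divide)
      also have "q powr (-\<beta>) \<le> c * s powr (- max \<beta> 0)"
      proof (cases "\<beta> \<ge> 0")
        case True
        have "q powr (-\<beta>) \<le> s powr (-\<beta>)" using True q s by (intro powr_mono2') auto
        then show ?thesis using True by (simp add: c_def)
      next
        case False
        have "q powr (-\<beta>) \<le> 2 powr (-\<beta>)" using False q qp by (intro powr_mono2) auto
        then show ?thesis using False s by (simp add: c_def)
      qed
      finally show ?thesis by (simp add: mult_left_mono mult.assoc)
    qed
    have "norm (g_beta \<beta> k a b h z) \<le> (\<Sum>j<k. norm (a j / (1 - b j * z) powr complex_of_real \<beta>)) + norm (h z)"
      unfolding g_beta_def by (intro order_trans[OF norm_triangle_ineq] add_mono norm_sum) auto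
    also have "\<dots> \<le> (\<Sum>j<k. norm (a j) * c * s powr (- max \<beta> 0)) + max H 0 * s powr (- max \<beta> 0)"
    proof (intro add_mono sum_mono trm)
      show "norm (h z) \<le> max H 0 * s powr (- max \<beta> 0)"
        using H[OF z] s1 by (smt (verit, best) mult_left_mono mult_cancel_left1 max.cobounded2)
    qed auto
    also have "\<dots> = K * s powr (- max \<beta> 0)"
      by (simp add: K_def sum_distrib_right distrib_right)
    finally show ?thesis by (simp add: s_def)
  qed
  show ?thesis using K main by blast
qed



definition Fq :: "(complex \<Rightarrow> complex) \<Rightarrow> complex \<Rightarrow> complex" where
  "Fq f = (\<lambda>w. if w = 0 then deriv f 0 else f w / w)"

lemma Fq_holo:
  assumes "f holomorphic_on ball 0 1" "f 0 = 0"
  shows "Fq f holomorphic_on ball 0 1"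
proof -
  have "(\<lambda>z. if z = 0 then deriv f 0 else (f z - f 0) / (z - 0)) holomorphic_on ball 0 1"
    by (rule pole_lemma[OF assms(1)]) simp
  moreover have "(\<lambda>z. if z = 0 then deriv f 0 else (f z - f 0) / (z - 0)) = Fq f"
    by (auto simp: fun_eq_iff Fq_def assms(2))
  ultimately show ?thesis by simp
qed

lemma ci_spike:
  assumes "\<And>w. w \<noteq> 0 \<Longrightarrow> P w = Q w"
  shows "contour_integral (linepath 0 z) P = contour_integral (linepath 0 z) Q"
proof (cases "z = 0")
  case True then show ?thesis by simp
next
  case False
  show ?thesis
    by (rule contour_integral_spike_finite_simple_path[of "{0}"]) (use False assms in auto)
qed

lemma primitive:
  assumes "G holomorphic_on ball 0 1" "x \<in> ball 0 1"
  shows "((\<lambda>x. contour_integral (linepath 0 x) G) has_field_derivative G x) (at x)"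
proof (rule triangle_contour_integrals_starlike_primitive[of "ball 0 1"])
  show "continuous_on (ball 0 1) G" using assms(1) by (rule holomorphic_on_imp_continuous_on)
  show "\<And>y::complex. y \<in> ball 0 1 \<Longrightarrow> closed_segment 0 y \<subseteq> ball 0 1"
    using convex_ball[of "0::complex" 1] by (intro closed_segment_subset) auto
  fix b c assume bc: "closed_segment b c \<subseteq> ball (0::complex) 1"
  then have b: "b \<in> ball 0 1" and c: "c \<in> ball 0 1" by (auto dest: subsetD[OF _ ends_in_segment(1)] subsetD[OF _ ends_in_segment(2)])
  have "(G has_contour_integral 0) (linepath 0 b +++ linepath b c +++ linepath c 0)"
  proof (rule Cauchy_theorem_starlike_simple[OF open_ball _ assms(1)])
    show "starlike (ball (0::complex) 1)" by (rule convex_imp_starlike) auto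
    show "valid_path (linepath 0 b +++ linepath b c +++ linepath c 0)" by simp
    show "path_image (linepath 0 b +++ linepath b c +++ linepath c 0) \<subseteq> ball 0 1"
    proof -
      have cv: "convex (ball (0::complex) 1)" by (rule convex_ball)
      have "closed_segment 0 b \<subseteq> ball 0 1" "closed_segment b c \<subseteq> ball 0 1" "closed_segment c 0 \<subseteq> ball 0 1"
        using closed_segment_subset[OF _ b cv, of 0] closed_segment_subset[OF b c cv]
          closed_segment_subset[OF c _ cv, of 0] by auto
      then show ?thesis by (simp add: path_image_join)
    qed
  qed simp
  then show "contour_integral (linepath 0 b) G + contour_integral (linepath b c) G + contour_integral (linepath c 0) G = 0"
    by (rule has_chain_integral_chain_integral3)
qed (use assms in auto)

lemma cesaro_eq:
  "cesaro_op g f z = contour_integral (linepath 0 z) (\<lambda>w. Fq f w * g w)"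
  unfolding cesaro_op_def by (rule ci_spike) (simp add: Fq_def)

lemma integrable_H:
  assumes "G holomorphic_on ball 0 1" "z \<in> ball 0 1"
  shows "G contour_integrable_on linepath 0 z"
proof (rule contour_integrable_holomorphic_simple[OF assms(1) open_ball])
  show "path_image (linepath 0 z) \<subseteq> ball 0 1"
    unfolding path_image_linepath by (intro closed_segment_subset convex_ball) (use assms(2) in auto)
qed simp

lemma cesaro_deriv:
  assumes "g holomorphic_on ball 0 1" "f holomorphic_on ball 0 1" "f 0 = 0" "x \<in> ball 0 1"
  shows "(cesaro_op g f has_field_derivative (Fq f x * g x)) (at x)"
proof -
  have "(\<lambda>w. Fq f w * g w) holomorphic_on ball 0 1"
    using Fq_holo[OF assms(2,3)] assms(1) by (intro holomorphic_intros)
  from primitive[OF this assms(4)] show ?thesis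
    by (simp add: cesaro_eq[abs_def])
qed

lemma cesaro_lin:
  assumes "g holomorphic_on ball 0 1" "f holomorphic_on ball 0 1" "f 0 = 0"
    "f' holomorphic_on ball 0 1" "f' 0 = 0" "z \<in> ball 0 1"
  shows "cesaro_op g (\<lambda>w. c * f w + d * f' w) z = c * cesaro_op g f z + d * cesaro_op g f' z"
proof -
  have h1: "(\<lambda>w. Fq f w * g w) holomorphic_on ball 0 1"
    using Fq_holo[OF assms(2,3)] assms(1) by (intro holomorphic_intros)
  have h2: "(\<lambda>w. Fq f' w * g w) holomorphic_on ball 0 1"
    using Fq_holo[OF assms(4,5)] assms(1) by (intro holomorphic_intros)
  have i1: "(\<lambda>w. Fq f w * g w) contour_integrable_on linepath 0 z" by (rule integrable_H[OF h1 assms(6)])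
  have i2: "(\<lambda>w. Fq f' w * g w) contour_integrable_on linepath 0 z" by (rule integrable_H[OF h2 assms(6)])
  have "cesaro_op g (\<lambda>w. c * f w + d * f' w) z =
        contour_integral (linepath 0 z) (\<lambda>w. c * (Fq f w * g w) + d * (Fq f' w * g w))"
    unfolding cesaro_op_def by (rule ci_spike) (simp add: Fq_def field_simps)
  also have "\<dots> = c * contour_integral (linepath 0 z) (\<lambda>w. Fq f w * g w) + d * contour_integral (linepath 0 z) (\<lambda>w. Fq f' w * g w)"
    using i1 i2 by (simp add: contour_integral_add contour_integrable_lmul contour_integral_lmul)
  finally show ?thesis by (simp add: cesaro_eq)
qed



lemma bloch_facts:
  assumes "f \<in> bloch_space0 \<alpha>"
  shows "f holomorphic_on ball 0 1" "f 0 = 0"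
    "\<And>w. w \<in> ball 0 1 \<Longrightarrow> (1 - (norm w)\<^sup>2) powr \<alpha> * norm (deriv f w) \<le> bloch_norm \<alpha> f"
    "bloch_norm \<alpha> f \<ge> 0"
proof -
  show "f holomorphic_on ball 0 1" "f 0 = 0" using assms by (auto simp: bloch_space0_def bloch_space_def)
  have bdd: "bdd_above ((\<lambda>z. (1 - (norm z)\<^sup>2) powr \<alpha> * norm (deriv f z)) ` ball 0 1)"
    using assms by (auto simp: bloch_space0_def bloch_space_def)
  show le: "\<And>w. w \<in> ball 0 1 \<Longrightarrow> (1 - (norm w)\<^sup>2) powr \<alpha> * norm (deriv f w) \<le> bloch_norm \<alpha> f"
    unfolding bloch_norm_def by (rule cSUP_upper[OF _ bdd])
  have "0 \<le> (1 - (norm (0::complex))\<^sup>2) powr \<alpha> * norm (deriv f 0)" by simp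
  also have "\<dots> \<le> bloch_norm \<alpha> f" by (rule le) simp
  finally show "bloch_norm \<alpha> f \<ge> 0" .
qed

lemma est:
  fixes \<alpha> \<beta> :: real and g :: "complex \<Rightarrow> complex"
  assumes a0: "\<alpha> > 0"
    and cond: "(\<beta> \<le> \<alpha> \<and> \<alpha> < 1) \<or> (\<beta> \<le> 1 \<and> 1 < \<alpha>) \<or> (\<beta> < \<alpha> \<and> \<alpha> = 1)"
    and K: "K \<ge> 0" and gb: "\<And>z. z \<in> ball 0 1 \<Longrightarrow> norm (g z) \<le> K * (1 - norm z) powr (- max \<beta> 0)"
  shows "\<exists>C0. \<forall>f\<in>bloch_space0 \<alpha>. \<forall>z\<in>ball 0 1.
           (1 - (norm z)\<^sup>2) powr \<alpha> * norm (Fq f z * g z) \<le> C0 * bloch_norm \<alpha> f"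
proof -
  define \<beta>' where "\<beta>' = max \<beta> 0"
  define \<gamma> where "\<gamma> = (if \<alpha> = 1 then 1 + (1 - \<beta>')/2 else \<alpha>)"
  define \<delta> where "\<delta> = max 0 (\<gamma> - 1)"
  define c where "c = 1 / \<bar>1 - \<gamma>\<bar>"
  have facts: "\<gamma> > 0" "\<gamma> \<noteq> 1" "\<alpha> \<le> \<gamma>" "\<alpha> - \<beta>' - \<delta> \<ge> 0"
    using a0 cond by (auto simp: \<gamma>_def \<delta>_def \<beta>'_def max_def field_simps)
  have c0: "c \<ge> 0" by (simp add: c_def)
  define C0 where "C0 = K * (1 + (1/2) powr (-\<gamma>) * (1/2) powr (-\<beta>') + 2 powr (\<alpha>+1) * c)"
  have p1: "(1/2::real) powr (-\<gamma>) \<ge> 0" "(1/2::real) powr (-\<beta>') \<ge> 0" "(2::real) powr (\<alpha>+1) \<ge> 0" by auto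
  show ?thesis
  proof (intro exI ballI)
    fix f z assume f: "f \<in> bloch_space0 \<alpha>" and z: "z \<in> ball (0::complex) 1"
    define M where "M = bloch_norm \<alpha> f"
    note bf = bloch_facts[OF f, folded M_def]
    have M: "M \<ge> 0" by (rule bf(4))
    have dbd: "norm (deriv f w) \<le> M * (1 - norm w) powr (-\<gamma>)" if w: "w \<in> ball 0 1" for w
    proof -
      define p where "p = 1 - norm w"
      have p: "0 < p" "p \<le> 1" using w by (auto simp: p_def)
      have "(norm w)\<^sup>2 \<le> norm w" using w by (simp add: power2_eq_square mult_left_le_one_le)
      then have pP: "p \<le> 1 - (norm w)\<^sup>2" by (simp add: p_def)
      have "p powr \<alpha> * norm (deriv f w) \<le> (1 - (norm w)\<^sup>2) powr \<alpha> * norm (deriv f w)"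
        using pP p a0 by (intro mult_right_mono powr_mono2) auto
      also have "\<dots> \<le> M" using bf(3)[OF w] .
      finally have "norm (deriv f w) \<le> M / p powr \<alpha>" using p by (simp add: field_simps mult.commute)
      also have "\<dots> = M * p powr (-\<alpha>)" by (simp add: powr_minus_divide)
      also have "\<dots> \<le> M * p powr (-\<gamma>)"
        using p facts M by (intro mult_left_mono powr_mono') auto
      finally show ?thesis by (simp add: p_def)
    qed
    define r where "r = norm z"
    define s where "s = 1 - r"
    have r: "0 \<le> r" "r < 1" using z by (auto simp: r_def)
    have s: "0 < s" "s \<le> 1" using r by (auto simp: s_def)
    have gz: "norm (g z) \<le> K * s powr (-\<beta>')" using gb[OF z] by (simp add: s_def r_def \<beta>'_def)
    have A0: "0 \<le> (1 - (norm z)\<^sup>2) powr \<alpha>" by simp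
    have "(norm z)\<^sup>2 < 1" using r by (simp add: r_def[symmetric] power_less_one_iff abs_square_less_1)
    then have A1: "(1 - (norm z)\<^sup>2) powr \<alpha> \<le> 1" using a0 by (intro powr_le1) auto
    have goal: "(1 - (norm z)\<^sup>2) powr \<alpha> * norm (Fq f z * g z) \<le> C0 * M"
    proof (cases "z = 0")
      case True
      have d0: "norm (deriv f 0) \<le> M" using bf(3)[of 0] by simp
      have g0: "norm (g 0) \<le> K" using gb[of 0] by simp
      have "(1 - (norm z)\<^sup>2) powr \<alpha> * norm (Fq f z * g z) = norm (deriv f 0) * norm (g 0)"
        using True by (simp add: Fq_def norm_mult)
      also have "\<dots> \<le> M * K" using d0 g0 M by (intro mult_mono) auto
      also have "\<dots> \<le> C0 * M" unfolding C0_def using K M p1 c0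
        by (simp add: algebra_simps mult_left_mono mult_nonneg_nonneg)
      finally show ?thesis .
    next
      case zn: False
      then have rp: "r > 0" by (simp add: r_def)
      have nFq: "norm (Fq f z * g z) = norm (f z) / r * norm (g z)"
        using zn by (simp add: Fq_def norm_mult norm_divide r_def)
      show ?thesis
      proof (cases "r \<le> 1/2")
        case True
        have cv: "convex (cball (0::complex) r)" by simp
        have sub: "cball 0 r \<subseteq> ball (0::complex) 1" using r by auto
        have fb: "norm (f z - f 0) \<le> (M * (1/2) powr (-\<gamma>)) * norm (z - 0)"
        proof (rule field_differentiable_bound[OF cv])
          fix w assume w: "w \<in> cball (0::complex) r"
          then have wb: "w \<in> ball 0 1" using sub by auto
          show "(f has_field_derivative deriv f w) (at w within cball 0 r)"
            using bf(1) wb by (meson DERIV_deriv_iff_field_differentiable has_field_derivative_at_within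
                 holomorphic_on_imp_differentiable_at open_ball)
          have "1/2 \<le> 1 - norm w" using w True by auto
          then have "(1 - norm w) powr (-\<gamma>) \<le> (1/2) powr (-\<gamma>)"
            using facts by (intro powr_mono2') auto
          then show "norm (deriv f w) \<le> M * (1/2) powr (-\<gamma>)"
            using dbd[OF wb] M by (meson mult_left_mono order_trans)
        qed (use r in \<open>auto simp: r_def\<close>)
        then have fz: "norm (f z) / r \<le> M * (1/2) powr (-\<gamma>)"
          using rp bf(2) by (simp add: r_def divide_le_eq)
        have "s powr (-\<beta>') \<le> (1/2) powr (-\<beta>')"
          using True s by (intro powr_mono2') (auto simp: s_def \<beta>'_def)
        then have gz2: "norm (g z) \<le> K * (1/2) powr (-\<beta>')" using gz K by (meson mult_left_mono order_trans)
        have "(1 - (norm z)\<^sup>2) powr \<alpha> * norm (Fq f z * g z) \<le> 1 * ((M * (1/2) powr (-\<gamma>)) * (K * (1/2) powr (-\<beta>')))"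
          unfolding nFq using A0 A1 fz gz2 M K p1 rp
          by (intro mult_mono) (auto intro!: mult_nonneg_nonneg)
        also have "\<dots> \<le> C0 * M" unfolding C0_def using K M p1 c0
          by (simp add: algebra_simps mult_left_mono mult_nonneg_nonneg)
        finally show ?thesis .
      next
        case False
        have fz0: "norm (f z) \<le> M * c * s powr (-\<delta>)"
          using growth[OF bf(1) bf(2) facts(1,2) M dbd z]
          by (simp add: c_def \<delta>_def s_def r_def)
        have fz: "norm (f z) / r \<le> 2 * (M * c * s powr (-\<delta>))"
        proof -
          have X0: "0 \<le> M * c * s powr (-\<delta>)" using M c0 by simp
          have "M * c * s powr (-\<delta>) * 1 \<le> M * c * s powr (-\<delta>) * (2 * r)"
            using X0 False by (intro mult_left_mono) auto
          then show ?thesis using fz0 rp by (simp add: divide_le_eq algebra_simps)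
        qed
        have "1 - (norm z)\<^sup>2 = s * (1 + r)" by (simp add: s_def r_def power2_eq_square algebra_simps)
        also have "\<dots> \<le> s * 2" using s r by (intro mult_left_mono) auto
        finally have "(1 - (norm z)\<^sup>2) powr \<alpha> \<le> (2 * s) powr \<alpha>"
          using \<open>(norm z)\<^sup>2 < 1\<close> a0 by (intro powr_mono2) auto
        then have A2: "(1 - (norm z)\<^sup>2) powr \<alpha> \<le> 2 powr \<alpha> * s powr \<alpha>"
          using s by (simp add: powr_mult)
        have "(1 - (norm z)\<^sup>2) powr \<alpha> * norm (Fq f z * g z) \<le> (2 powr \<alpha> * s powr \<alpha>) * ((2 * (M * c * s powr (-\<delta>))) * (K * s powr (-\<beta>')))"
          unfolding nFq using A0 A2 fz gz M K c0 rp
          by (intro mult_mono) (auto intro!: mult_nonneg_nonneg)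
        also have "\<dots> = (2 powr \<alpha> * 2) * c * K * M * (s powr \<alpha> * s powr (-\<delta>) * s powr (-\<beta>'))"
          by (simp add: algebra_simps)
        also have "s powr \<alpha> * s powr (-\<delta>) * s powr (-\<beta>') = s powr (\<alpha> - \<delta> - \<beta>')"
          using s by (simp add: powr_add[symmetric])
        also have "s powr (\<alpha> - \<delta> - \<beta>') \<le> 1" using s facts by (intro powr_le1) auto
        also have "2 powr \<alpha> * 2 = 2 powr (\<alpha> + 1)" by (simp add: powr_add)
        finally have "(1 - (norm z)\<^sup>2) powr \<alpha> * norm (Fq f z * g z) \<le> 2 powr (\<alpha> + 1) * c * K * M"
          using p1 c0 K M by (simp add: mult_left_mono mult_nonneg_nonneg)
        also have "\<dots> \<le> C0 * M" unfolding C0_def using K M p1 c0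
          by (simp add: algebra_simps mult_left_mono mult_nonneg_nonneg)
        finally show ?thesis .
      qed
    qed
    then show "(1 - (norm z)\<^sup>2) powr \<alpha> * norm (Fq f z * g z) \<le> C0 * bloch_norm \<alpha> f"
      by (simp add: M_def)
  qed
qed



theorem corollary2p2:
  fixes \<alpha> \<beta> :: real and k :: nat and a b :: "nat \<Rightarrow> complex" and h :: "complex \<Rightarrow> complex"
  assumes "\<alpha> > 0"
    and "(\<beta> \<le> \<alpha> \<and> \<alpha> < 1) \<or> (\<beta> \<le> 1 \<and> 1 < \<alpha>) \<or> (\<beta> < \<alpha> \<and> \<alpha> = 1)"
    and "k \<ge> 1"
    and "inj_on b {..<k}"
    and "\<And>j. j < k \<Longrightarrow> norm (b j) = 1"
    and "\<And>j. j < k \<Longrightarrow> a j \<noteq> 0"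
    and "h holomorphic_on ball 0 1"
    and "bounded (h ` ball 0 1)"
  shows "(\<forall>f\<in>bloch_space0 \<alpha>. cesaro_op (g_beta \<beta> k a b h) f \<in> bloch_space0 \<alpha>)
    \<and> (\<forall>f\<in>bloch_space0 \<alpha>. \<forall>f'\<in>bloch_space0 \<alpha>. \<forall>c d. \<forall>z\<in>ball 0 1.
          cesaro_op (g_beta \<beta> k a b h) (\<lambda>w. c * f w + d * f' w) z
          = c * cesaro_op (g_beta \<beta> k a b h) f z + d * cesaro_op (g_beta \<beta> k a b h) f' z)
    \<and> (\<exists>C. \<forall>f\<in>bloch_space0 \<alpha>.
          bloch_norm \<alpha> (cesaro_op (g_beta \<beta> k a b h) f) \<le> C * bloch_norm \<alpha> f)"
proof -
  define g where "g = g_beta \<beta> k a b h"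
  have gh: "g holomorphic_on ball 0 1" unfolding g_def by (rule g_holo[OF assms(5,7)])
  have "\<exists>K\<ge>0. \<forall>z\<in>ball 0 1. norm (g_beta \<beta> k a b h z) \<le> K * (1 - norm z) powr (- max \<beta> 0)"
    by (rule g_bound) (use assms(5,8) in auto)
  then obtain K where K: "K \<ge> 0" and gb0: "\<forall>z\<in>ball 0 1. norm (g_beta \<beta> k a b h z) \<le> K * (1 - norm z) powr (- max \<beta> 0)"
    by (elim exE conjE)
  have gb: "\<And>z. z \<in> ball 0 1 \<Longrightarrow> norm (g z) \<le> K * (1 - norm z) powr (- max \<beta> 0)"
    using gb0 unfolding g_def by (elim ballE) auto
  obtain C0 where C0: "\<And>f z. f \<in> bloch_space0 \<alpha> \<Longrightarrow> z \<in> ball 0 1 \<Longrightarrow>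
      (1 - (norm z)\<^sup>2) powr \<alpha> * norm (Fq f z * g z) \<le> C0 * bloch_norm \<alpha> f"
    using est[OF assms(1,2) K gb] by blast
  have dC: "\<And>z. z \<in> ball 0 1 \<Longrightarrow> deriv (cesaro_op g f) z = Fq f z * g z"
    and hC: "cesaro_op g f holomorphic_on ball 0 1"
    and bC: "\<And>z. z \<in> ball 0 1 \<Longrightarrow> (1 - (norm z)\<^sup>2) powr \<alpha> * norm (deriv (cesaro_op g f) z) \<le> C0 * bloch_norm \<alpha> f"
    if f: "f \<in> bloch_space0 \<alpha>" for f
  proof -
    note bf = bloch_facts[OF f]
    have D: "(cesaro_op g f has_field_derivative (Fq f z * g z)) (at z)" if "z \<in> ball 0 1" for z
      by (rule cesaro_deriv[OF gh bf(1,2) that])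
    show dC: "deriv (cesaro_op g f) z = Fq f z * g z" if z: "z \<in> ball 0 1" for z
      by (rule DERIV_imp_deriv[OF D[OF z]])
    show "cesaro_op g f holomorphic_on ball 0 1"
      unfolding holomorphic_on_def
    proof
      fix z assume "z \<in> ball (0::complex) 1"
      then have "cesaro_op g f field_differentiable at z"
        using D unfolding field_differentiable_def by blast
      then show "cesaro_op g f field_differentiable at z within ball 0 1"
        by (rule field_differentiable_at_within)
    qed
    show "(1 - (norm z)\<^sup>2) powr \<alpha> * norm (deriv (cesaro_op g f) z) \<le> C0 * bloch_norm \<alpha> f"
      if z: "z \<in> ball 0 1" for z
      unfolding dC[OF z] by (rule C0[OF f z])
  qed
  have P1: "\<forall>f\<in>bloch_space0 \<alpha>. cesaro_op g f \<in> bloch_space0 \<alpha>"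
  proof
    fix f assume f: "f \<in> bloch_space0 \<alpha>"
    have "bdd_above ((\<lambda>z. (1 - (norm z)\<^sup>2) powr \<alpha> * norm (deriv (cesaro_op g f) z)) ` ball 0 1)"
      by (rule bdd_aboveI2[OF bC[OF f]])
    moreover have "cesaro_op g f 0 = 0" by (simp add: cesaro_op_def)
    ultimately show "cesaro_op g f \<in> bloch_space0 \<alpha>"
      using hC[OF f] by (simp add: bloch_space0_def bloch_space_def)
  qed
  have P2: "\<forall>f\<in>bloch_space0 \<alpha>. \<forall>f'\<in>bloch_space0 \<alpha>. \<forall>c d. \<forall>z\<in>ball 0 1.
          cesaro_op g (\<lambda>w. c * f w + d * f' w) z = c * cesaro_op g f z + d * cesaro_op g f' z"
  proof (intro ballI allI)
    fix f f' c d z assume f: "f \<in> bloch_space0 \<alpha>" and f': "f' \<in> bloch_space0 \<alpha>" and z: "z \<in> ball (0::complex) 1"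
    show "cesaro_op g (\<lambda>w. c * f w + d * f' w) z = c * cesaro_op g f z + d * cesaro_op g f' z"
      by (rule cesaro_lin[OF gh bloch_facts(1,2)[OF f] bloch_facts(1,2)[OF f'] z])
  qed
  have P3: "\<forall>f\<in>bloch_space0 \<alpha>. bloch_norm \<alpha> (cesaro_op g f) \<le> C0 * bloch_norm \<alpha> f"
  proof
    fix f assume f: "f \<in> bloch_space0 \<alpha>"
    show "bloch_norm \<alpha> (cesaro_op g f) \<le> C0 * bloch_norm \<alpha> f"
    proof -
      have "bloch_norm \<alpha> (cesaro_op g f) = (SUP z\<in>ball 0 1. (1 - (norm z)\<^sup>2) powr \<alpha> * norm (deriv (cesaro_op g f) z))"
        by (simp add: bloch_norm_def)
      also have "\<dots> \<le> C0 * bloch_norm \<alpha> f"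
      proof (rule cSUP_least)
        show "ball (0::complex) 1 \<noteq> {}" by simp
        fix z assume z: "z \<in> ball (0::complex) 1"
        show "(1 - (norm z)\<^sup>2) powr \<alpha> * norm (deriv (cesaro_op g f) z) \<le> C0 * bloch_norm \<alpha> f"
          by (rule bC[OF f z])
      qed
      finally show ?thesis .
    qed
  qed
  from P3 have P3': "\<exists>C. \<forall>f\<in>bloch_space0 \<alpha>. bloch_norm \<alpha> (cesaro_op g f) \<le> C * bloch_norm \<alpha> f"
    by (rule exI)
  show ?thesis using P1 P2 P3' unfolding g_def by (intro conjI)
qed

end
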